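(* There is an absolute constant $c>0$ such that for all $k\ge 2$, $\gamma\in(0,1/4]$ and $\varepsilon\in(0,1]$ the following holds: if each of $n$ users reports its sample via $\varepsilon$-RAPPOR and the curator applies any (possibly randomized) decision rule to the $n$ reports (so that the whole procedure is a uniformity tester over $[k]$ with distance parameter $\gamma$), then $n\ge c\,k^{3/2}/(\gamma^2\varepsilon^2)$.
   Context: $\Delta([k])$ is the set of probability distributions on $[k]=\{1,\dots,k\}$, $u$ the uniform distribution on $[k]$, $d_{TV}(p,q)=\frac12\|p-q\|_1$. Users hold i.i.d. samples $X_1,\dots,X_n$ from an unknown $p\in\Delta([k])$. The $\varepsilon$-RAPPOR mechanism maps $x\in[k]$ to a random vector $b\in\{0,1\}^k$ obtained from the one-hot vector $e_x$ by flipping each coordinate independently with probability $1/(e^{\varepsilon/2}+1)$, independently across users. A uniformity tester with distance parameter $\gamma$ must, for every $p$, output ``uniform'' with probability at least $2/3$ if $p=u$ and ``not uniform'' with probability at least $2/3$ if $d_{TV}(p,u)>\gamma$. *)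

theory Defs
  imports "HOL-Probability.Probability"
begin

definition is_dist_on :: "nat \<Rightarrow> nat pmf \<Rightarrow> bool" where
  "is_dist_on k p \<longleftrightarrow> set_pmf p \<subseteq> {1..k}"

definition unif :: "nat \<Rightarrow> nat pmf" where
  "unif k = pmf_of_set {1..k}"

definition dTV :: "nat \<Rightarrow> nat pmf \<Rightarrow> nat pmf \<Rightarrow> real" where
  "dTV k p q = (1/2) * (\<Sum>i\<in>{1..k}. \<bar>pmf p i - pmf q i\<bar>)"

text \<open>epsilon-RAPPOR: the output vector b in {0,1}^k is represented by the set of its
  coordinates (in {1..k}) equal to 1. Coordinate j of the one-hot vector e_x is flipped
  independently with probability 1/(exp(eps/2)+1).\<close>
definition flip_prob :: "real \<Rightarrow> real" where
  "flip_prob eps = 1 / (exp (eps / 2) + 1)"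

definition rappor :: "nat \<Rightarrow> real \<Rightarrow> nat \<Rightarrow> nat set pmf" where
  "rappor k eps x =
     map_pmf (\<lambda>f. {j. f j})
       (Pi_pmf {1..k} False
          (\<lambda>j. map_pmf (\<lambda>flip. (j = x) \<noteq> flip) (bernoulli_pmf (flip_prob eps))))"

definition reports :: "nat \<Rightarrow> real \<Rightarrow> nat \<Rightarrow> nat pmf \<Rightarrow> (nat \<Rightarrow> nat set) pmf" where
  "reports k eps n p = Pi_pmf {..<n} {} (\<lambda>_. bind_pmf p (rappor k eps))"

text \<open>A (possibly randomized) decision rule T maps the n reports to a distribution on
  outputs; True means "uniform", False means "not uniform".\<close>
definition accept_prob :: "nat \<Rightarrow> real \<Rightarrow> nat \<Rightarrow> ((nat \<Rightarrow> nat set) \<Rightarrow> bool pmf) \<Rightarrow> nat pmf \<Rightarrow> real" where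
  "accept_prob k eps n T p = measure_pmf.prob (bind_pmf (reports k eps n p) T) {True}"

definition rappor_uniformity_tester ::
  "nat \<Rightarrow> real \<Rightarrow> real \<Rightarrow> nat \<Rightarrow> ((nat \<Rightarrow> nat set) \<Rightarrow> bool pmf) \<Rightarrow> bool" where
  "rappor_uniformity_tester k eps gamma n T \<longleftrightarrow>
     (\<forall>p. is_dist_on k p \<longrightarrow>
        (p = unif k \<longrightarrow> accept_prob k eps n T p \<ge> 2/3) \<and>
        (dTV k p (unif k) > gamma \<longrightarrow> 1 - accept_prob k eps n T p \<ge> 2/3))"

end

theory Submission
  imports Defs
begin


definition aa :: "real \<Rightarrow> real" where "aa eps = exp (eps/2)"
definition Bf :: "nat \<Rightarrow> real \<Rightarrow> nat set \<Rightarrow> real" where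
  "Bf k eps b = (\<Prod>j\<in>{1..k}. if j \<in> b then flip_prob eps else 1 - flip_prob eps)"
definition rr :: "real \<Rightarrow> nat \<Rightarrow> nat set \<Rightarrow> real" where
  "rr eps x b = (if x \<in> b then exp (eps/2) else exp (-eps/2))"

lemma flip_facts:
  shows "0 < flip_prob eps" "flip_prob eps < 1"
    "1 - flip_prob eps = flip_prob eps * exp (eps/2)"
    "flip_prob eps = (1 - flip_prob eps) * exp (-eps/2)"
proof -
  have e: "exp (eps/2) > 0" by simp
  show "0 < flip_prob eps" unfolding flip_prob_def by (simp add: add_pos_pos)
  have e1: "0 < 1 + exp (eps/2)" using e by linarith
  show "flip_prob eps < 1" unfolding flip_prob_def using e e1 by (simp add: field_simps)
  show "1 - flip_prob eps = flip_prob eps * exp (eps/2)" unfolding flip_prob_def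
    using e e1 by (simp add: field_simps)
  have "exp (-eps/2) * exp (eps/2) = 1" by (simp flip: exp_add)
  then show "flip_prob eps = (1 - flip_prob eps) * exp (-eps/2)" unfolding flip_prob_def
    using e e1 by (simp add: field_simps)
qed

lemma pmf_map_inj_on_S:
  assumes "inj_on g S" "set_pmf M \<subseteq> S" "f0 \<in> S"
  shows "pmf (map_pmf g M) (g f0) = pmf M f0"
proof (cases "f0 \<in> set_pmf M")
  case True
  then show ?thesis using assms by (intro pmf_map_inj) (auto intro: inj_on_subset)
next
  case False
  have "g f0 \<notin> set_pmf (map_pmf g M)"
    using assms False by (auto simp: inj_on_def)
  then show ?thesis using False by (metis set_pmf_iff)
qed

lemma set_rappor: "set_pmf (rappor k eps x) \<subseteq> Pow {1..k}"
proof
  fix b assume "b \<in> set_pmf (rappor k eps x)"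
  then obtain f where f: "f \<in> set_pmf (Pi_pmf {1..k} False
          (\<lambda>j. map_pmf (\<lambda>flip. (j = x) \<noteq> flip) (bernoulli_pmf (flip_prob eps))))" and bf: "b = {j. f j}"
    unfolding rappor_def by auto
  have "\<forall>j. j \<notin> {1..k} \<longrightarrow> f j = False" using set_Pi_pmf_subset[of "{1..k}" False] f by blast
  then show "b \<in> Pow {1..k}" using bf by auto
qed

lemma pmf_xor_bern:
  "pmf (map_pmf (\<lambda>flip. c \<noteq> flip) (bernoulli_pmf q)) v = pmf (bernoulli_pmf q) (c \<noteq> v)"
proof -
  have "inj (\<lambda>flip. c \<noteq> flip)" by (auto simp: inj_def)
  from pmf_map_inj'[OF this, of "bernoulli_pmf q" "c \<noteq> v"]
  have "pmf (map_pmf (\<lambda>flip. c \<noteq> flip) (bernoulli_pmf q)) (c \<noteq> (c \<noteq> v)) = pmf (bernoulli_pmf q) (c \<noteq> v)" .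
  moreover have "(c \<noteq> (c \<noteq> v)) = v" by auto
  ultimately show ?thesis by simp
qed

lemma rappor_pmf:
  assumes b: "b \<subseteq> {1..k}" and x: "x \<in> {1..k}"
  shows "pmf (rappor k eps x) b = Bf k eps b * rr eps x b"
proof -
  let ?e = "flip_prob eps"
  let ?S = "{f. \<forall>j. j \<notin> {1..k} \<longrightarrow> f j = False}"
  have inj: "inj_on (\<lambda>f. {j. f j}) ?S" by (auto simp: inj_on_def fun_eq_iff)
  have bb: "b = (\<lambda>f. {j. f j}) (\<lambda>j. j \<in> b)" by simp
  have "pmf (rappor k eps x) b = pmf (Pi_pmf {1..k} False
          (\<lambda>j. map_pmf (\<lambda>flip. (j = x) \<noteq> flip) (bernoulli_pmf ?e))) (\<lambda>j. j \<in> b)"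
    unfolding rappor_def
    apply (subst bb)
    apply (rule pmf_map_inj_on_S[OF inj])
    using set_Pi_pmf_subset[of "{1..k}" False] b by auto
  also have "\<dots> = (\<Prod>j\<in>{1..k}. pmf (bernoulli_pmf ?e) ((j = x) \<noteq> (j \<in> b)))"
    using b apply (subst pmf_Pi') apply simp apply blast
    by (rule prod.cong, rule refl, rule pmf_xor_bern)
  also have "\<dots> = (\<Prod>j\<in>{1..k}. if j = x then (if x \<in> b then 1 - ?e else ?e)
                    else (if j \<in> b then ?e else 1 - ?e))"
    using flip_facts[of eps] by (intro prod.cong) auto
  also have "\<dots> = (if x \<in> b then 1 - ?e else ?e) *
        (\<Prod>j\<in>{1..k} - {x}. if j \<in> b then ?e else 1 - ?e)"
    using x by (subst prod.remove[of _ x]) (auto intro!: prod.cong)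
  also have "\<dots> = rr eps x b * ((if x \<in> b then ?e else 1 - ?e) *
        (\<Prod>j\<in>{1..k} - {x}. if j \<in> b then ?e else 1 - ?e))"
    using flip_facts[of eps] unfolding rr_def by (auto simp: mult_ac)
  also have "\<dots> = rr eps x b * Bf k eps b"
    unfolding Bf_def using x by (subst prod.remove[of _ x, symmetric]) auto
  finally show ?thesis by simp
qed

lemma rappor_sum:
  assumes x: "x \<in> {1..k}"
  shows "(\<Sum>b\<in>Pow {1..k}. Bf k eps b * rr eps x b) = 1"
proof -
  have "(\<Sum>b\<in>Pow {1..k}. Bf k eps b * rr eps x b) = (\<Sum>b\<in>Pow {1..k}. pmf (rappor k eps x) b)"
    using x by (intro sum.cong) (auto simp: rappor_pmf)
  also have "\<dots> = 1" by (rule sum_pmf_eq_1) (simp, rule set_rappor)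
  finally show ?thesis .
qed

lemma set_Q: "set_pmf p \<subseteq> {1..k} \<Longrightarrow> set_pmf (bind_pmf p (rappor k eps)) \<subseteq> Pow {1..k}"
  using set_rappor[of k eps] by (auto simp: set_bind_pmf)

lemma pmf_Q:
  assumes p: "set_pmf p \<subseteq> {1..k}" and b: "b \<subseteq> {1..k}"
  shows "pmf (bind_pmf p (rappor k eps)) b = (\<Sum>x\<in>{1..k}. pmf p x * (Bf k eps b * rr eps x b))"
proof -
  have "pmf (bind_pmf p (rappor k eps)) b = (\<integral>x. pmf (rappor k eps x) b \<partial>measure_pmf p)"
    by (rule pmf_bind)
  also have "\<dots> = (\<Sum>x\<in>{1..k}. pmf p x *\<^sub>R pmf (rappor k eps x) b)"
    by (rule integral_measure_pmf) (use p in auto)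
  also have "\<dots> = (\<Sum>x\<in>{1..k}. pmf p x * (Bf k eps b * rr eps x b))"
    using b by (intro sum.cong) (auto simp: rappor_pmf)
  finally show ?thesis .
qed

definition Om :: "nat \<Rightarrow> nat \<Rightarrow> (nat \<Rightarrow> nat set) set" where
  "Om k n = PiE_dflt {..<n} {} (\<lambda>_. Pow {1..k})"

lemma finite_Om: "finite (Om k n)"
  unfolding Om_def by (intro finite_PiE_dflt) auto

lemma set_reports: "set_pmf p \<subseteq> {1..k} \<Longrightarrow> set_pmf (reports k eps n p) \<subseteq> Om k n"
  unfolding reports_def Om_def
  apply (subst set_Pi_pmf, simp)
  using set_Q[of p k eps] unfolding PiE_dflt_def o_def by blast

lemma pmf_reports:
  "\<omega> \<in> Om k n \<Longrightarrow> pmf (reports k eps n p) \<omega> = (\<Prod>i<n. pmf (bind_pmf p (rappor k eps)) (\<omega> i))"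
  unfolding reports_def Om_def by (subst pmf_Pi') (auto simp: PiE_dflt_def)

lemma accept_sum:
  assumes "set_pmf p \<subseteq> {1..k}"
  shows "accept_prob k eps n T p = (\<Sum>\<omega>\<in>Om k n. pmf (reports k eps n p) \<omega> * pmf (T \<omega>) True)"
proof -
  have "accept_prob k eps n T p = pmf (bind_pmf (reports k eps n p) T) True"
    unfolding accept_prob_def by (simp add: measure_pmf_single)
  also have "\<dots> = (\<integral>\<omega>. pmf (T \<omega>) True \<partial>measure_pmf (reports k eps n p))" by (rule pmf_bind)
  also have "\<dots> = (\<Sum>\<omega>\<in>Om k n. pmf (reports k eps n p) \<omega> *\<^sub>R pmf (T \<omega>) True)"
    by (rule integral_measure_pmf) (use finite_Om set_reports[OF assms] in blast)+
  finally show ?thesis by simp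
qed

lemma sum_prod_Om:
  fixes g :: "nat set \<Rightarrow> real"
  shows "(\<Sum>\<omega>\<in>Om k n. \<Prod>i<n. g (\<omega> i)) = (\<Sum>b\<in>Pow {1..k}. g b) ^ n"
proof -
  let ?h = "\<lambda>h x. if x \<in> {..<n} then h x else ({}::nat set)"
  have inj: "inj_on ?h (PiE {..<n} (\<lambda>_. Pow {1..k}))"
  proof (rule inj_onI)
    fix f g assume f: "f \<in> PiE {..<n} (\<lambda>_. Pow {1..k})" and g: "g \<in> PiE {..<n} (\<lambda>_. Pow {1..k})"
      and e: "?h f = ?h g"
    show "f = g"
    proof
      fix x show "f x = g x"
      proof (cases "x < n")
        case True then show ?thesis using fun_cong[OF e, of x] by simp
      next
        case False then show ?thesis using f g by (auto simp: PiE_def extensional_def)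
      qed
    qed
  qed
  have "(\<Sum>\<omega>\<in>Om k n. \<Prod>i<n. g (\<omega> i)) = (\<Sum>\<omega>\<in>?h ` PiE {..<n} (\<lambda>_. Pow {1..k}). \<Prod>i<n. g (\<omega> i))"
    unfolding Om_def by (simp only: dflt_image_PiE)
  also have "\<dots> = (\<Sum>f\<in>PiE {..<n} (\<lambda>_. Pow {1..k}). \<Prod>i<n. g (f i))"
    by (subst sum.reindex[OF inj]) (auto intro!: sum.cong prod.cong)
  also have "\<dots> = (\<Prod>i<n. \<Sum>b\<in>Pow {1..k}. g b)"
    by (subst prod_sum_PiE) auto
  finally show ?thesis by simp
qed



definition sg :: "nat set \<Rightarrow> nat \<Rightarrow> real" where "sg Z i = (if i \<in> Z then 1 else -1)"
definition sZ :: "nat \<Rightarrow> nat set \<Rightarrow> nat \<Rightarrow> real" where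
  "sZ m Z x = (if x \<in> {1..2*m} then (if odd x then 1 else -1) * sg Z ((x+1) div 2) else 0)"

lemma pair_sum:
  fixes f :: "nat \<Rightarrow> real"
  shows "(\<Sum>x\<in>{1..2*m}. f x) = (\<Sum>i\<in>{1..m}. f (2*i-1) + f (2*i))"
proof (induction m)
  case 0 then show ?case by simp
next
  case (Suc m)
  have e: "{1..2*Suc m} = insert (2*m+2) (insert (2*m+1) {1..2*m})" by auto
  have "(\<Sum>x\<in>{1..2*Suc m}. f x) = f (2*m+2) + f (2*m+1) + (\<Sum>x\<in>{1..2*m}. f x)"
    unfolding e by simp
  also have "\<dots> = (\<Sum>i\<in>{1..Suc m}. f (2*i-1) + f (2*i))"
    using Suc by (simp add: add_ac)
  finally show ?case .
qed

lemma sZ_sum: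
  fixes h :: "nat \<Rightarrow> real"
  assumes "2*m \<le> k"
  shows "(\<Sum>x\<in>{1..k}. sZ m Z x * h x) = (\<Sum>i\<in>{1..m}. sg Z i * (h (2*i-1) - h (2*i)))"
proof -
  have "(\<Sum>x\<in>{1..k}. sZ m Z x * h x) = (\<Sum>x\<in>{1..2*m}. sZ m Z x * h x)"
    using assms by (intro sum.mono_neutral_right) (auto simp: sZ_def)
  also have "\<dots> = (\<Sum>i\<in>{1..m}. sZ m Z (2*i-1) * h (2*i-1) + sZ m Z (2*i) * h (2*i))"
    by (rule pair_sum)
  also have "\<dots> = (\<Sum>i\<in>{1..m}. sg Z i * (h (2*i-1) - h (2*i)))"
  proof (intro sum.cong refl)
    fix i assume i: "i \<in> {1..m}"
    have a: "(2*i-1+1) div 2 = i" "(2*i+1) div 2 = i" using i by auto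
    have o: "odd (2*i-1)" using i by auto
    show "sZ m Z (2*i-1) * h (2*i-1) + sZ m Z (2*i) * h (2*i) = sg Z i * (h (2*i-1) - h (2*i))"
      unfolding sZ_def using i a o by (auto simp: algebra_simps)
  qed
  finally show ?thesis .
qed

lemma sZ_abs_sum:
  assumes "2*m \<le> k"
  shows "(\<Sum>x\<in>{1..k}. \<bar>sZ m Z x\<bar>) = 2 * m"
proof -
  have "(\<Sum>x\<in>{1..k}. \<bar>sZ m Z x\<bar>) = (\<Sum>x\<in>{1..2*m}. \<bar>sZ m Z x\<bar>)"
    using assms by (intro sum.mono_neutral_right) (auto simp: sZ_def)
  also have "\<dots> = (\<Sum>x\<in>{1..2*m}. 1)"
    by (intro sum.cong refl) (auto simp: sZ_def sg_def)
  finally show ?thesis by simp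
qed

lemma sZ_abs_le: "\<bar>sZ m Z x\<bar> \<le> 1"
  by (auto simp: sZ_def sg_def)

definition fZ :: "nat \<Rightarrow> real \<Rightarrow> nat set \<Rightarrow> nat \<Rightarrow> real" where
  "fZ k g Z x = (if x \<in> {1..k} then 1/k + g/k * sZ (k div 2) Z x else 0)"

definition pZ :: "nat \<Rightarrow> real \<Rightarrow> nat set \<Rightarrow> nat pmf" where
  "pZ k g Z = embed_pmf (fZ k g Z)"

lemma fZ_nonneg:
  assumes "0 \<le> g" "g \<le> 1"
  shows "0 \<le> fZ k g Z x"
proof -
  have "- 1 \<le> sZ (k div 2) Z x" using sZ_abs_le[of "k div 2" Z x] by linarith
  then have "- g \<le> g * sZ (k div 2) Z x" using assms
    by (metis mult.commute mult_left_mono mult_minus1_right)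
  then have "0 \<le> 1 + g * sZ (k div 2) Z x" using assms by linarith
  then have "0 \<le> (1 + g * sZ (k div 2) Z x) / k" by simp
  then show ?thesis unfolding fZ_def by (simp add: add_divide_distrib)
qed

lemma fZ_sum:
  assumes "k \<ge> 1"
  shows "(\<Sum>x\<in>{1..k}. fZ k g Z x) = 1"
proof -
  have "(\<Sum>x\<in>{1..k}. fZ k g Z x) = (\<Sum>x\<in>{1..k}. 1/k) + g/k * (\<Sum>x\<in>{1..k}. sZ (k div 2) Z x * 1)"
    by (simp add: fZ_def sum.distrib sum_distrib_left)
  also have "(\<Sum>x\<in>{1..k}. sZ (k div 2) Z x * 1) = 0"
    by (subst sZ_sum) auto
  finally show ?thesis using assms by simp
qed

lemma pmf_pZ:
  assumes "0 \<le> g" "g \<le> 1" "k \<ge> 1"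
  shows "pmf (pZ k g Z) x = fZ k g Z x"
  unfolding pZ_def
proof (rule pmf_embed_pmf)
  show "\<And>x. 0 \<le> fZ k g Z x" using fZ_nonneg assms by blast
  have "(\<integral>\<^sup>+ x. ennreal (fZ k g Z x) \<partial>count_space UNIV) = (\<Sum>x\<in>{1..k}. ennreal (fZ k g Z x))"
    by (rule nn_integral_count_space') (auto simp: fZ_def)
  also have "\<dots> = ennreal (\<Sum>x\<in>{1..k}. fZ k g Z x)"
    using fZ_nonneg[OF assms(1,2)] by (simp add: sum_ennreal)
  also have "\<dots> = 1" using fZ_sum assms by simp
  finally show "(\<integral>\<^sup>+ x. ennreal (fZ k g Z x) \<partial>count_space UNIV) = 1" .
qed

lemma set_pZ:
  assumes "0 \<le> g" "g \<le> 1" "k \<ge> 1"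
  shows "set_pmf (pZ k g Z) \<subseteq> {1..k}"
  using assms by (auto simp: set_pmf_iff pmf_pZ fZ_def split: if_splits)

lemma pmf_unif: "k \<ge> 1 \<Longrightarrow> pmf (unif k) x = (if x \<in> {1..k} then 1/k else 0)"
  unfolding unif_def by (simp add: indicator_def)

lemma set_unif: "k \<ge> 1 \<Longrightarrow> set_pmf (unif k) \<subseteq> {1..k}"
  unfolding unif_def by simp

lemma dTV_pZ:
  assumes "0 \<le> g" "g \<le> 1" "k \<ge> 1"
  shows "dTV k (pZ k g Z) (unif k) = g * real (k div 2) / k"
proof -
  have "dTV k (pZ k g Z) (unif k) = 1/2 * (\<Sum>x\<in>{1..k}. g/k * \<bar>sZ (k div 2) Z x\<bar>)"
    unfolding dTV_def using assms
    by (intro arg_cong[where f="\<lambda>t. 1/2 * t"] sum.cong refl)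
       (auto simp: pmf_pZ pmf_unif fZ_def abs_mult)
  also have "\<dots> = 1/2 * (g/k * (2 * (k div 2)))"
    using sZ_abs_sum[of "k div 2" k Z] by (subst sum_distrib_left[symmetric]) simp
  finally show ?thesis by simp
qed

definition Af :: "nat \<Rightarrow> real \<Rightarrow> nat set \<Rightarrow> real" where
  "Af k eps b = (\<Sum>x\<in>{1..k}. rr eps x b) / k"
definition dd :: "real \<Rightarrow> nat \<Rightarrow> nat set \<Rightarrow> real" where
  "dd eps i b = rr eps (2*i-1) b - rr eps (2*i) b"
definition EZ :: "nat \<Rightarrow> real \<Rightarrow> nat set \<Rightarrow> nat set \<Rightarrow> real" where
  "EZ k eps Z b = (\<Sum>i\<in>{1..k div 2}. sg Z i * dd eps i b)"

lemma QZ_formula: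
  assumes "0 \<le> g" "g \<le> 1" "k \<ge> 1"
  shows "(\<Sum>x\<in>{1..k}. pmf (pZ k g Z) x * (Bf k eps b * rr eps x b))
     = Bf k eps b * (Af k eps b + g/k * EZ k eps Z b)"
proof -
  have "(\<Sum>x\<in>{1..k}. pmf (pZ k g Z) x * (Bf k eps b * rr eps x b))
      = Bf k eps b * ((\<Sum>x\<in>{1..k}. rr eps x b) / k + g/k * (\<Sum>x\<in>{1..k}. sZ (k div 2) Z x * rr eps x b))"
    using assms by (simp add: pmf_pZ fZ_def sum_distrib_left sum_distrib_right sum.distrib
        sum_divide_distrib algebra_simps)
  also have "(\<Sum>x\<in>{1..k}. sZ (k div 2) Z x * rr eps x b) = EZ k eps Z b"
    unfolding EZ_def dd_def by (subst sZ_sum) auto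
  finally show ?thesis unfolding Af_def .
qed

lemma Qu_formula:
  assumes "k \<ge> 1"
  shows "(\<Sum>x\<in>{1..k}. pmf (unif k) x * (Bf k eps b * rr eps x b)) = Bf k eps b * Af k eps b"
  using assms by (simp add: pmf_unif Af_def sum_distrib_left sum_distrib_right sum_divide_distrib algebra_simps)



lemma Bf_pos: "0 < Bf k eps b"
  unfolding Bf_def using flip_facts[of eps] by (intro prod_pos) auto

lemma rr_pos: "0 < rr eps x b" by (simp add: rr_def)

lemma Af_pos: "k \<ge> 1 \<Longrightarrow> 0 < Af k eps b"
  unfolding Af_def by (intro divide_pos_pos sum_pos) (auto simp: rr_pos)

lemma F2: assumes "k \<ge> 1" shows "(\<Sum>b\<in>Pow {1..k}. Bf k eps b * Af k eps b) = 1"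
proof -
  have "(\<Sum>b\<in>Pow {1..k}. Bf k eps b * Af k eps b) = (\<Sum>x\<in>{1..k}. (\<Sum>b\<in>Pow {1..k}. Bf k eps b * rr eps x b)) / k"
    unfolding Af_def by (simp add: sum_distrib_left sum_divide_distrib sum.swap[of _ "Pow _"])
  also have "(\<Sum>x\<in>{1..k}. (\<Sum>b\<in>Pow {1..k}. Bf k eps b * rr eps x b)) = (\<Sum>x\<in>{1..k}. 1)"
    by (intro sum.cong refl rappor_sum) auto
  finally show ?thesis using assms by simp
qed

lemma F3: "(\<Sum>b\<in>Pow {1..k}. Bf k eps b * EZ k eps Z b) = 0"
proof -
  have "(\<Sum>b\<in>Pow {1..k}. Bf k eps b * EZ k eps Z b) =
     (\<Sum>i\<in>{1..k div 2}. sg Z i * ((\<Sum>b\<in>Pow {1..k}. Bf k eps b * rr eps (2*i-1) b) - (\<Sum>b\<in>Pow {1..k}. Bf k eps b * rr eps (2*i) b)))"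
    unfolding EZ_def dd_def
    by (simp add: sum_distrib_left sum.swap[of _ "Pow _"] sum_subtractf algebra_simps)
  also have "\<dots> = 0"
  proof (intro sum.neutral ballI)
    fix i assume i: "i \<in> {1..k div 2}"
    then have "2*i-1 \<in> {1..k}" "2*i \<in> {1..k}" by auto
    then show "sg Z i * ((\<Sum>b\<in>Pow {1..k}. Bf k eps b * rr eps (2*i-1) b) - (\<Sum>b\<in>Pow {1..k}. Bf k eps b * rr eps (2*i) b)) = 0"
      by (simp only: rappor_sum) simp
  qed
  finally show ?thesis .
qed

definition tau :: "nat \<Rightarrow> nat \<Rightarrow> nat \<Rightarrow> nat" where
  "tau a c x = (if x = a then c else if x = c then a else x)"

lemma tau_tau: "tau a c (tau a c x) = x" by (simp add: tau_def)

lemma tau_mem: "(x \<in> tau a c ` b) = (tau a c x \<in> b)"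
  by (metis image_iff tau_tau)

lemma tau_bij: "a \<in> S \<Longrightarrow> c \<in> S \<Longrightarrow> bij_betw (tau a c) S S"
  by (rule bij_betw_byWitness[where f'="tau a c"]) (auto simp: tau_tau, auto simp: tau_def)

lemma tau_img_bij: "a \<in> S \<Longrightarrow> c \<in> S \<Longrightarrow> bij_betw (\<lambda>b. tau a c ` b) (Pow S) (Pow S)"
  apply (rule bij_betw_byWitness[where f'="\<lambda>b. tau a c ` b"])
  by (auto simp: image_image tau_tau, auto simp: tau_def)

lemma rr_tau: "rr eps x (tau a c ` b) = rr eps (tau a c x) b"
  unfolding rr_def by (simp add: tau_mem)

lemma Bf_tau:
  assumes "a \<in> {1..k}" "c \<in> {1..k}"
  shows "Bf k eps (tau a c ` b) = Bf k eps b"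
proof -
  have "Bf k eps (tau a c ` b) = (\<Prod>j\<in>{1..k}. (\<lambda>j. if j \<in> b then flip_prob eps else 1 - flip_prob eps) (tau a c j))"
    unfolding Bf_def by (simp add: tau_mem)
  also have "\<dots> = Bf k eps b"
    unfolding Bf_def by (rule prod.reindex_bij_betw[OF tau_bij[OF assms]])
  finally show ?thesis .
qed

lemma Af_tau:
  assumes "a \<in> {1..k}" "c \<in> {1..k}"
  shows "Af k eps (tau a c ` b) = Af k eps b"
proof -
  have "(\<Sum>x\<in>{1..k}. rr eps x (tau a c ` b)) = (\<Sum>x\<in>{1..k}. (\<lambda>x. rr eps x b) (tau a c x))"
    by (simp add: rr_tau)
  also have "\<dots> = (\<Sum>x\<in>{1..k}. rr eps x b)"
    by (rule sum.reindex_bij_betw[OF tau_bij[OF assms]])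
  finally show ?thesis unfolding Af_def by simp
qed

lemma orth:
  assumes i: "i \<in> {1..k div 2}" and j: "j \<in> {1..k div 2}" and ij: "i \<noteq> j"
  shows "(\<Sum>b\<in>Pow {1..k}. Bf k eps b * dd eps i b * dd eps j b / Af k eps b) = 0"
proof -
  let ?t = "tau (2*i-1) (2*i)"
  have a: "2*i-1 \<in> {1..k}" "2*i \<in> {1..k}" using i by auto
  let ?F = "\<lambda>b. Bf k eps b * dd eps i b * dd eps j b / Af k eps b"
  have ddi: "dd eps i (?t ` b) = - dd eps i b" for b
    unfolding dd_def rr_tau by (simp add: tau_def)
  have ddj: "dd eps j (?t ` b) = dd eps j b" for b
    unfolding dd_def rr_tau using i j ij by (auto simp: tau_def)
  have Fn: "?F (?t ` b) = - ?F b" for b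
    using ddi ddj Bf_tau[OF a] Af_tau[OF a] by simp
  have "(\<Sum>b\<in>Pow {1..k}. ?F b) = (\<Sum>b\<in>Pow {1..k}. ?F (?t ` b))"
    by (rule sum.reindex_bij_betw[OF tau_img_bij[OF a], symmetric])
  also have "\<dots> = (\<Sum>b\<in>Pow {1..k}. - ?F b)" by (intro sum.cong refl, rule Fn)
  also have "\<dots> = - (\<Sum>b\<in>Pow {1..k}. ?F b)" by (simp add: sum_negf)
  finally show ?thesis by simp
qed

definition NN :: "nat \<Rightarrow> real \<Rightarrow> nat \<Rightarrow> real" where
  "NN k eps i = (\<Sum>b\<in>Pow {1..k}. Bf k eps b * dd eps i b * dd eps i b / Af k eps b)"

lemma F4:
  "(\<Sum>b\<in>Pow {1..k}. Bf k eps b * EZ k eps Z b * EZ k eps Z' b / Af k eps b)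
    = (\<Sum>i\<in>{1..k div 2}. sg Z i * sg Z' i * NN k eps i)"
proof -
  have "(\<Sum>b\<in>Pow {1..k}. Bf k eps b * EZ k eps Z b * EZ k eps Z' b / Af k eps b)
    = (\<Sum>i\<in>{1..k div 2}. \<Sum>j\<in>{1..k div 2}. sg Z i * sg Z' j *
         (\<Sum>b\<in>Pow {1..k}. Bf k eps b * dd eps i b * dd eps j b / Af k eps b))"
    unfolding EZ_def
    by (simp add: sum_distrib_left sum_distrib_right sum_divide_distrib sum.swap[of _ "Pow _"] mult_ac)
  also have "\<dots> = (\<Sum>i\<in>{1..k div 2}. sg Z i * sg Z' i * NN k eps i)"
  proof (intro sum.cong refl)
    fix i assume i: "i \<in> {1..k div 2}"
    have "(\<Sum>j\<in>{1..k div 2}. sg Z i * sg Z' j *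
         (\<Sum>b\<in>Pow {1..k}. Bf k eps b * dd eps i b * dd eps j b / Af k eps b))
        = (\<Sum>j\<in>{i}. sg Z i * sg Z' j *
         (\<Sum>b\<in>Pow {1..k}. Bf k eps b * dd eps i b * dd eps j b / Af k eps b))"
      using i by (intro sum.mono_neutral_right) (auto, use orth[OF i] in force)
    then show "(\<Sum>j\<in>{1..k div 2}. sg Z i * sg Z' j *
         (\<Sum>b\<in>Pow {1..k}. Bf k eps b * dd eps i b * dd eps j b / Af k eps b))
        = sg Z i * sg Z' i * NN k eps i" by (simp add: NN_def)
  qed
  finally show ?thesis .
qed

lemma rho:
  assumes k: "k \<ge> 1"
  shows "(\<Sum>b\<in>Pow {1..k}. (Bf k eps b * (Af k eps b + c * EZ k eps Z b)) *
              (Bf k eps b * (Af k eps b + c * EZ k eps Z' b)) / (Bf k eps b * Af k eps b))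
     = 1 + c^2 * (\<Sum>i\<in>{1..k div 2}. sg Z i * sg Z' i * NN k eps i)"
proof -
  have eq: "(Bf k eps b * (Af k eps b + c * EZ k eps Z b)) *
              (Bf k eps b * (Af k eps b + c * EZ k eps Z' b)) / (Bf k eps b * Af k eps b)
      = Bf k eps b * Af k eps b + c * (Bf k eps b * EZ k eps Z b) + c * (Bf k eps b * EZ k eps Z' b)
        + c^2 * (Bf k eps b * EZ k eps Z b * EZ k eps Z' b / Af k eps b)" for b
  proof -
    have "Bf k eps b \<noteq> 0" "Af k eps b \<noteq> 0" using Bf_pos[of k eps b] Af_pos[OF k, of eps b] by auto
    then show ?thesis by (simp add: field_simps power2_eq_square)
  qed
  show ?thesis
    by (simp only: eq sum.distrib sum_distrib_left[symmetric] F2[OF k] F3 F4)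
qed

lemma NN_bound:
  assumes k: "k \<ge> 1" and e: "0 \<le> eps" and i: "i \<in> {1..k div 2}"
  shows "0 \<le> NN k eps i" "NN k eps i \<le> exp eps * (exp (eps/2) - exp (-eps/2))^2"
proof -
  let ?a = "exp (eps/2)" and ?ai = "exp (-eps/2)"
  have aai: "?a * ?ai = 1" by (simp flip: exp_add)
  have le: "?ai \<le> ?a" using e by simp
  have rr_ge: "?ai \<le> rr eps x b" for x b using le by (simp add: rr_def)
  have rr_le: "rr eps x b \<le> ?a" for x b using le by (simp add: rr_def)
  show "0 \<le> NN k eps i" unfolding NN_def
  proof (intro sum_nonneg divide_nonneg_pos)
    fix b show "0 < Af k eps b" by (rule Af_pos[OF k])
    have "0 \<le> Bf k eps b * (dd eps i b * dd eps i b)" using Bf_pos[of k eps b] by simp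
    then show "0 \<le> Bf k eps b * dd eps i b * dd eps i b" by (simp add: mult.assoc)
  qed
  have i1: "1 \<in> {1..k}" using k by auto
  have trm: "Bf k eps b * dd eps i b * dd eps i b / Af k eps b
      \<le> exp eps * (?a - ?ai)^2 * (Bf k eps b * rr eps 1 b)" for b
  proof -
    have A: "?ai \<le> Af k eps b"
    proof -
      have "(\<Sum>x\<in>{1..k}. ?ai) \<le> (\<Sum>x\<in>{1..k}. rr eps x b)" by (intro sum_mono rr_ge)
      then show ?thesis using k unfolding Af_def by (simp add: field_simps)
    qed
    have Apos: "0 < Af k eps b" by (rule Af_pos[OF k])
    have d2: "dd eps i b * dd eps i b \<le> (?a - ?ai)^2"
    proof (cases "(2*i-1 \<in> b) = (2*i \<in> b)")
      case True
      then have "dd eps i b = 0" unfolding dd_def rr_def by auto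
      then show ?thesis by simp
    next
      case False
      then have "dd eps i b = ?a - ?ai \<or> dd eps i b = -(?a - ?ai)" unfolding dd_def rr_def by auto
      moreover have "(-(?a - ?ai)) * (-(?a - ?ai)) = (?a - ?ai)^2" by (simp only: power2_eq_square minus_mult_minus)
      ultimately show ?thesis by (auto simp only: power2_eq_square) 
    qed
    have d2n: "0 \<le> dd eps i b * dd eps i b" by simp
    have inv: "1 / Af k eps b \<le> ?a"
    proof -
      have "1 / Af k eps b \<le> 1 / ?ai" using A Apos by (intro divide_left_mono) auto
      also have "1 / ?ai = ?a" using aai by (simp add: field_simps)
      finally show ?thesis .
    qed
    have B: "Bf k eps b \<le> ?a * (Bf k eps b * rr eps 1 b)"
    proof -
      have "Bf k eps b = Bf k eps b * (?a * ?ai)" using aai by simp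
      also have "\<dots> \<le> Bf k eps b * (?a * rr eps 1 b)"
        using Bf_pos[of k eps b] rr_ge[of 1 b] by (intro mult_left_mono) auto
      finally show ?thesis by (simp add: mult_ac)
    qed
    have "Bf k eps b * dd eps i b * dd eps i b / Af k eps b
        = Bf k eps b * (dd eps i b * dd eps i b) * (1 / Af k eps b)" by simp
    also have "\<dots> \<le> (?a * (Bf k eps b * rr eps 1 b)) * (?a - ?ai)^2 * ?a"
      using B d2 d2n inv Bf_pos[of k eps b] Apos rr_pos[of eps 1 b]
      by (intro mult_mono) (auto intro!: mult_nonneg_nonneg less_imp_le)
    also have "\<dots> = exp eps * (?a - ?ai)^2 * (Bf k eps b * rr eps 1 b)"
      by (simp add: mult_ac flip: exp_add)
    finally show ?thesis .
  qed
  have "NN k eps i \<le> (\<Sum>b\<in>Pow {1..k}. exp eps * (?a - ?ai)^2 * (Bf k eps b * rr eps 1 b))"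
    unfolding NN_def by (intro sum_mono trm)
  also have "\<dots> = exp eps * (?a - ?ai)^2"
    by (simp only: sum_distrib_left[symmetric] rappor_sum[OF i1] mult_1_right)
  finally show "NN k eps i \<le> exp eps * (?a - ?ai)^2" .
qed



lemma tester_core:
  fixes Pu :: "'w \<Rightarrow> real" and P :: "'z \<Rightarrow> 'w \<Rightarrow> real" and t :: "'w \<Rightarrow> real"
  assumes W: "finite W" and Zs: "finite Zs" "Zs \<noteq> {}"
    and Pu_pos: "\<And>\<omega>. \<omega> \<in> W \<Longrightarrow> 0 < Pu \<omega>" and Pu1: "(\<Sum>\<omega>\<in>W. Pu \<omega>) = 1"
    and P1: "\<And>Z. Z \<in> Zs \<Longrightarrow> (\<Sum>\<omega>\<in>W. P Z \<omega>) = 1"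
    and t: "\<And>\<omega>. \<omega> \<in> W \<Longrightarrow> 0 \<le> t \<omega> \<and> t \<omega> \<le> 1"
    and acc_u: "(\<Sum>\<omega>\<in>W. Pu \<omega> * t \<omega>) \<ge> 2/3"
    and acc_Z: "\<And>Z. Z \<in> Zs \<Longrightarrow> (\<Sum>\<omega>\<in>W. P Z \<omega> * t \<omega>) \<le> 1/3"
  shows "10/9 \<le> (\<Sum>Z\<in>Zs. \<Sum>Z'\<in>Zs. \<Sum>\<omega>\<in>W. P Z \<omega> * P Z' \<omega> / Pu \<omega>) / (card Zs)^2"
proof -
  define N where "N = real (card Zs)"
  have Npos: "N > 0" using Zs unfolding N_def by (simp add: card_gt_0_iff)
  define av where "av \<omega> = (\<Sum>Z\<in>Zs. P Z \<omega>) / N" for \<omega>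
  define D where "D \<omega> = av \<omega> - Pu \<omega>" for \<omega>
  have sav: "(\<Sum>\<omega>\<in>W. av \<omega>) = 1"
  proof -
    have "(\<Sum>\<omega>\<in>W. av \<omega>) = (\<Sum>Z\<in>Zs. \<Sum>\<omega>\<in>W. P Z \<omega>) / N"
      unfolding av_def by (simp add: sum_divide_distrib[symmetric] sum.swap[of _ W])
    also have "\<dots> = (\<Sum>Z\<in>Zs. 1) / N" using P1 by simp
    finally show ?thesis using Npos unfolding N_def by simp
  qed
  have savt: "(\<Sum>\<omega>\<in>W. av \<omega> * t \<omega>) \<le> 1/3"
  proof -
    have "(\<Sum>\<omega>\<in>W. av \<omega> * t \<omega>) = (\<Sum>Z\<in>Zs. \<Sum>\<omega>\<in>W. P Z \<omega> * t \<omega>) / N"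
      unfolding av_def by (simp add: sum_divide_distrib[symmetric] sum.swap[of _ W] sum_distrib_right)
    also have "\<dots> \<le> (\<Sum>Z\<in>Zs. 1/3) / N" using acc_Z Npos
      by (intro divide_right_mono sum_mono) auto
    finally show ?thesis using Npos unfolding N_def by simp
  qed
  have DT: "(\<Sum>\<omega>\<in>W. D \<omega> * t \<omega>) \<le> -1/3"
    using savt acc_u unfolding D_def by (simp add: left_diff_distrib sum_subtractf)
  have Pt: "(\<Sum>\<omega>\<in>W. Pu \<omega> * t \<omega> ^ 2) \<le> 1"
  proof -
    have "(\<Sum>\<omega>\<in>W. Pu \<omega> * t \<omega> ^ 2) \<le> (\<Sum>\<omega>\<in>W. Pu \<omega>)"
    proof (intro sum_mono)
      fix \<omega> assume w: "\<omega> \<in> W"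
      have "t \<omega> ^ 2 \<le> 1" using t[OF w] by (simp add: power_le_one)
      then show "Pu \<omega> * t \<omega> ^ 2 \<le> Pu \<omega>" using Pu_pos[OF w]
        by (metis mult.right_neutral mult_left_mono less_imp_le)
    qed
    then show ?thesis using Pu1 by simp
  qed
  have key: "0 \<le> (\<Sum>\<omega>\<in>W. D \<omega>^2 / Pu \<omega>) + 2/3 * (\<Sum>\<omega>\<in>W. D \<omega> * t \<omega>) + 1/9 * (\<Sum>\<omega>\<in>W. Pu \<omega> * t \<omega> ^ 2)"
  proof -
    have "0 \<le> (\<Sum>\<omega>\<in>W. Pu \<omega> * (D \<omega> / Pu \<omega> + t \<omega> / 3)^2)"
      using Pu_pos by (intro sum_nonneg) (simp add: less_imp_le)
    also have "\<dots> = (\<Sum>\<omega>\<in>W. D \<omega>^2 / Pu \<omega> + 2/3 * (D \<omega> * t \<omega>) + 1/9 * (Pu \<omega> * t \<omega> ^ 2))"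
    proof (intro sum.cong refl)
      fix \<omega> assume "\<omega> \<in> W"
      then have "Pu \<omega> \<noteq> 0" using Pu_pos by force
      then show "Pu \<omega> * (D \<omega> / Pu \<omega> + t \<omega> / 3)^2 = D \<omega>^2 / Pu \<omega> + 2/3 * (D \<omega> * t \<omega>) + 1/9 * (Pu \<omega> * t \<omega> ^ 2)"
        by (simp add: field_simps power2_eq_square)
    qed
    finally show ?thesis by (simp add: sum.distrib sum_distrib_left)
  qed
  have D2: "(\<Sum>\<omega>\<in>W. D \<omega>^2 / Pu \<omega>) \<ge> 1/9" using key DT Pt by linarith
  have D2e: "(\<Sum>\<omega>\<in>W. D \<omega>^2 / Pu \<omega>) = (\<Sum>\<omega>\<in>W. av \<omega>^2 / Pu \<omega>) - 1"
  proof -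
    have "(\<Sum>\<omega>\<in>W. D \<omega>^2 / Pu \<omega>) = (\<Sum>\<omega>\<in>W. av \<omega>^2 / Pu \<omega> - 2 * av \<omega> + Pu \<omega>)"
    proof (intro sum.cong refl)
      fix \<omega> assume "\<omega> \<in> W"
      then have "Pu \<omega> \<noteq> 0" using Pu_pos by force
      then show "D \<omega>^2 / Pu \<omega> = av \<omega>^2 / Pu \<omega> - 2 * av \<omega> + Pu \<omega>"
        unfolding D_def by (simp add: field_simps power2_eq_square)
    qed
    also have "\<dots> = (\<Sum>\<omega>\<in>W. av \<omega>^2 / Pu \<omega>) - 2 * (\<Sum>\<omega>\<in>W. av \<omega>) + (\<Sum>\<omega>\<in>W. Pu \<omega>)"
      by (simp add: sum.distrib sum_subtractf sum_distrib_left)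
    finally show ?thesis using sav Pu1 by simp
  qed
  have avsq: "(\<Sum>\<omega>\<in>W. av \<omega>^2 / Pu \<omega>) = (\<Sum>Z\<in>Zs. \<Sum>Z'\<in>Zs. \<Sum>\<omega>\<in>W. P Z \<omega> * P Z' \<omega> / Pu \<omega>) / N^2"
  proof -
    have "(\<Sum>\<omega>\<in>W. av \<omega>^2 / Pu \<omega>) = (\<Sum>\<omega>\<in>W. \<Sum>Z\<in>Zs. \<Sum>Z'\<in>Zs. P Z \<omega> * P Z' \<omega> / Pu \<omega> / N^2)"
    proof (intro sum.cong refl)
      fix \<omega>
      have "av \<omega>^2 = (\<Sum>Z\<in>Zs. \<Sum>Z'\<in>Zs. P Z \<omega> * P Z' \<omega>) / N^2"
        unfolding av_def power_divide by (simp only: power2_eq_square sum_product)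
      then show "av \<omega>^2 / Pu \<omega> = (\<Sum>Z\<in>Zs. \<Sum>Z'\<in>Zs. P Z \<omega> * P Z' \<omega> / Pu \<omega> / N^2)"
        by (simp only: sum_divide_distrib) (simp add: divide_divide_eq_left mult.commute)
    qed
    also have "\<dots> = (\<Sum>Z\<in>Zs. \<Sum>Z'\<in>Zs. \<Sum>\<omega>\<in>W. P Z \<omega> * P Z' \<omega> / Pu \<omega>) / N^2"
    proof -
      have "(\<Sum>\<omega>\<in>W. \<Sum>Z\<in>Zs. \<Sum>Z'\<in>Zs. P Z \<omega> * P Z' \<omega> / Pu \<omega> / N^2)
          = (\<Sum>Z\<in>Zs. \<Sum>\<omega>\<in>W. \<Sum>Z'\<in>Zs. P Z \<omega> * P Z' \<omega> / Pu \<omega> / N^2)"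
        by (rule sum.swap)
      also have "\<dots> = (\<Sum>Z\<in>Zs. \<Sum>Z'\<in>Zs. \<Sum>\<omega>\<in>W. P Z \<omega> * P Z' \<omega> / Pu \<omega> / N^2)"
        by (intro sum.cong refl sum.swap)
      also have "\<dots> = (\<Sum>Z\<in>Zs. \<Sum>Z'\<in>Zs. \<Sum>\<omega>\<in>W. P Z \<omega> * P Z' \<omega> / Pu \<omega>) / N^2"
        by (simp only: sum_divide_distrib)
      finally show ?thesis .
    qed
    finally show ?thesis .
  qed
  show ?thesis using D2 D2e avsq unfolding N_def by simp
qed

lemma sum_exp_signs:
  fixes w :: "nat \<Rightarrow> real"
  assumes "finite M"
  shows "(\<Sum>Z\<in>Pow M. exp (\<Sum>i\<in>M. sg Z i * w i)) = (\<Prod>i\<in>M. exp (w i) + exp (- w i))"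
proof -
  have "(\<Sum>Z\<in>Pow M. exp (\<Sum>i\<in>M. sg Z i * w i)) = (\<Sum>Z\<in>Pow M. (\<Prod>i\<in>Z. exp (w i)) * (\<Prod>i\<in>M-Z. exp (- w i)))"
  proof (intro sum.cong refl)
    fix Z assume Z: "Z \<in> Pow M"
    have "exp (\<Sum>i\<in>M. sg Z i * w i) = (\<Prod>i\<in>M. if i \<in> Z then exp (w i) else exp (- w i))"
      unfolding exp_sum[OF assms] by (intro prod.cong refl) (simp add: sg_def)
    also have "\<dots> = (\<Prod>i\<in>M \<inter> {x. x \<in> Z}. exp (w i)) * (\<Prod>i\<in>M \<inter> - {x. x \<in> Z}. exp (- w i))"
      using assms by (rule prod.If_cases)
    also have "M \<inter> {x. x \<in> Z} = Z" using Z by auto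
    also have "M \<inter> - {x. x \<in> Z} = M - Z" by auto
    finally show "exp (\<Sum>i\<in>M. sg Z i * w i) = (\<Prod>i\<in>Z. exp (w i)) * (\<Prod>i\<in>M-Z. exp (- w i))" .
  qed
  also have "\<dots> = (\<Prod>i\<in>M. exp (w i) + exp (- w i))"
    using assms by (rule prod_add[symmetric])
  finally show ?thesis .
qed

lemma cosh_bound:
  fixes y :: real
  assumes "\<bar>y\<bar> \<le> 1"
  shows "exp y + exp (- y) \<le> 2 * exp (y^2)"
proof -
  define x where "x = \<bar>y\<bar>"
  have x: "0 \<le> x" "x \<le> 1" using assms unfolding x_def by auto
  have e: "exp y + exp (- y) = exp x + exp (- x)" unfolding x_def by (cases "y \<ge> 0") auto
  have "x^2 = y^2" unfolding x_def by simp
  have a: "exp x \<le> 1 + x + x^2" using exp_bound[OF x] .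
  have b: "exp (- x) \<le> 1 - x + x^2"
  proof -
    have "1 + x \<le> exp x" by (rule exp_ge_add_one_self)
    have "exp (- x) = 1 / exp x" by (simp add: exp_minus field_simps)
    also have "\<dots> \<le> 1 / (1 + x)" using \<open>1 + x \<le> exp x\<close> x by (intro divide_left_mono) auto
    also have "\<dots> \<le> 1 - x + x^2"
    proof -
      have "1 \<le> (1 + x) * (1 - x + x^2)" using x by (simp add: algebra_simps power2_eq_square power3_eq_cube)
      then show ?thesis using x by (simp add: field_simps)
    qed
    finally show ?thesis .
  qed
  have c: "1 + x^2 \<le> exp (x^2)" by (rule exp_ge_add_one_self)
  have "exp (x^2) = exp (y^2)" using \<open>x^2 = y^2\<close> by simp
  then show ?thesis using a b c e by linarith
qed



lemma eps_bound:
  fixes eps :: real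
  assumes "0 < eps" "eps \<le> 1"
  shows "exp eps * (exp (eps/2) - exp (-eps/2))^2 \<le> 8 * eps^2"
proof -
  have a: "exp (eps/2) \<le> 1 + eps/2 + (eps/2)^2" using assms by (intro exp_bound) auto
  have "(eps/2)^2 \<le> eps/4" using assms by (simp add: power2_eq_square field_simps mult_left_le)
  with a have a': "exp (eps/2) \<le> 1 + 3/4 * eps" by simp
  have b: "1 + (-eps/2) \<le> exp (-eps/2)" by (rule exp_ge_add_one_self)
  have le: "exp (-eps/2) \<le> exp (eps/2)" using assms by simp
  have d0: "0 \<le> exp (eps/2) - exp (-eps/2)" using le by simp
  have d1: "exp (eps/2) - exp (-eps/2) \<le> 5/4 * eps" using a' b by simp
  have sq: "(exp (eps/2) - exp (-eps/2))^2 \<le> (5/4 * eps)^2"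
    using d1 d0 by (rule power_mono)
  have e3: "exp eps \<le> 3" using exp_le assms by (meson exp_le_cancel_iff order_trans)
  have "exp eps * (exp (eps/2) - exp (-eps/2))^2 \<le> 3 * (5/4 * eps)^2"
    using e3 sq by (intro mult_mono) auto
  also have "\<dots> \<le> 8 * eps^2" by (simp add: power2_eq_square)
  finally show ?thesis .
qed

lemma final_arith:
  fixes n k q Y m :: real
  assumes k: "k \<ge> 1" and q: "q > 0" and n: "n \<ge> 0" and Ydef: "Y = 128 * n * q / k^2"
    and m: "m \<le> k / 2" "m \<ge> 0"
    and cases: "Y \<ge> 1 \<or> 10/9 \<le> exp (m * Y^2)"
  shows "n \<ge> (1/300) * k powr (3/2) / q"
proof -
  define s where "s = sqrt k"
  have s1: "s \<ge> 1" unfolding s_def using k by simp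
  have ks: "k = s^2" unfolding s_def using k by simp
  have kp: "k powr (3/2) = s^3"
  proof -
    have "(3/2::real) = 1 + 1/2" by simp
    then have "k powr (3/2) = k powr (1 + 1/2)" by (rule arg_cong)
    also have "\<dots> = k powr 1 * k powr (1/2)" by (rule powr_add)
    also have "\<dots> = k * k powr (1/2)" using k by simp
    also have "\<dots> = s^3" using k unfolding s_def by (simp add: powr_half_sqrt ks power3_eq_cube power2_eq_square)
    finally show ?thesis .
  qed
  have goal: "s^3 / 300 \<le> n * q \<Longrightarrow> ?thesis" using q by (simp add: kp field_simps)
  show ?thesis
  proof (rule goal, rule ccontr)
    assume neg: "\<not> s^3 / 300 \<le> n * q"
    then have nq: "n * q < s^3 / 300" by simp
    have nq0: "0 \<le> n * q" using n q by simp
    have kpos: "k > 0" using k by simp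
    have Y0: "0 \<le> Y" unfolding Ydef using nq0 kpos by simp
    have Yeq: "Y = 128 * (n*q) / s^4" unfolding Ydef ks by (simp add: power2_eq_square power4_eq_xxxx mult.assoc)
    have s4: "s^3 \<le> s^4" using s1 by (simp add: power_increasing)
    have Ylt: "Y < 128 / 300 / s" 
    proof -
      have "Y = 128 * (n*q) / s^4" by (rule Yeq)
      also have "\<dots> < 128 * (s^3/300) / s^4" using nq s1 by (intro divide_strict_right_mono) auto
      also have "\<dots> = 128 / 300 / s" using s1 by (simp add: field_simps power_numeral_reduce power_Suc)
      finally show ?thesis .
    qed
    have "128/300/s \<le> 128/300" using s1 by (simp add: field_simps)
    then have Y1: "Y < 1" using Ylt by linarith
    then have ex: "10/9 \<le> exp (m * Y^2)" using cases by linarith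
    have mY: "m * Y^2 < 1/10"
    proof -
      have "Y^2 \<le> (128/300/s)^2" using Y0 Ylt by (intro power_mono) auto
      then have "m * Y^2 \<le> (s^2/2) * (128/300/s)^2" using m ks Y0
        by (intro mult_mono) auto
      also have "\<dots> = (128/300)^2 / 2" using s1 by (simp add: field_simps power2_eq_square)
      also have "\<dots> < 1/10" by (simp add: power2_eq_square)
      finally show ?thesis .
    qed
    have mY0: "0 \<le> m * Y^2" using m by simp
    have "exp (m * Y^2) \<le> 1 + m * Y^2 + (m*Y^2)^2" using mY0 mY by (intro exp_bound) auto
    also have "(m*Y^2)^2 \<le> (1/10) * (m * Y^2)"
    proof -
      have "(m*Y^2) * (m*Y^2) \<le> (1/10) * (m * Y^2)" using mY0 mY by (intro mult_right_mono) auto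
      then show ?thesis by (simp add: power2_eq_square)
    qed
    finally have "exp (m * Y^2) \<le> 1 + 11/10 * (m * Y^2)" by simp
    then have "exp (m * Y^2) < 10/9" using mY by linarith
    then show False using ex by simp
  qed
qed



lemma main_bound:
  fixes k n :: nat and gamma eps :: real and T :: "(nat \<Rightarrow> nat set) \<Rightarrow> bool pmf"
  assumes k: "k \<ge> 2" and g0: "0 < gamma" and g1: "gamma \<le> 1/4" and e0: "0 < eps" and e1: "eps \<le> 1"
    and tst: "rappor_uniformity_tester k eps gamma n T"
  shows "real n \<ge> (1/300) * real k powr (3/2) / (gamma^2 * eps^2)"
proof -
  define m where "m = k div 2"
  define g where "g = 4 * gamma"
  define c where "c = g / k"
  have k1: "k \<ge> 1" using k by simp
  have m1: "m \<ge> 1" using k unfolding m_def by simp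
  have mk: "real m \<le> real k / 2" unfolding m_def by linarith
  have "k < 4 * (k div 2)" using k by presburger
  then have m4: "4 * real m > real k" unfolding m_def by linarith
  have g0': "0 \<le> g" "g \<le> 1" using g0 g1 unfolding g_def by auto
  define Qu where "Qu b = Bf k eps b * Af k eps b" for b
  define QZ where "QZ Z b = Bf k eps b * (Af k eps b + c * EZ k eps Z b)" for Z b
  have Qu_pmf: "pmf (bind_pmf (unif k) (rappor k eps)) b = Qu b" if "b \<in> Pow {1..k}" for b
    using that pmf_Q[OF set_unif[OF k1], of b eps] Qu_formula[OF k1, of eps b] unfolding Qu_def by simp
  have QZ_pmf: "pmf (bind_pmf (pZ k g Z) (rappor k eps)) b = QZ Z b" if "b \<in> Pow {1..k}" for b Z
    using that pmf_Q[OF set_pZ[OF g0' k1, of Z], of b eps] QZ_formula[OF g0' k1, of Z eps b] unfolding QZ_def c_def by simp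
  have Qu_pos: "0 < Qu b" for b unfolding Qu_def using Bf_pos Af_pos[OF k1] by (simp add: mult_pos_pos)
  define W where "W = Om k n"
  define Pu where "Pu \<omega> = pmf (reports k eps n (unif k)) \<omega>" for \<omega>
  define P where "P Z \<omega> = pmf (reports k eps n (pZ k g Z)) \<omega>" for Z \<omega>
  define t where "t \<omega> = pmf (T \<omega>) True" for \<omega>
  define Zs where "Zs = Pow {1..m}"
  have Pu_eq: "Pu \<omega> = (\<Prod>i<n. Qu (\<omega> i))" if "\<omega> \<in> W" for \<omega>
  proof -
    have "\<omega> i \<in> Pow {1..k}" if "i < n" for i using \<open>\<omega> \<in> W\<close> that unfolding W_def Om_def PiE_dflt_def by auto
    then show ?thesis unfolding Pu_def using pmf_reports[OF that[unfolded W_def]] Qu_pmf by simp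
  qed
  have P_eq: "P Z \<omega> = (\<Prod>i<n. QZ Z (\<omega> i))" if "\<omega> \<in> W" for \<omega> Z
  proof -
    have "\<omega> i \<in> Pow {1..k}" if "i < n" for i using \<open>\<omega> \<in> W\<close> that unfolding W_def Om_def PiE_dflt_def by auto
    then show ?thesis unfolding P_def using pmf_reports[OF that[unfolded W_def]] QZ_pmf by simp
  qed
  have unif_dist: "is_dist_on k (unif k)" unfolding is_dist_on_def by (rule set_unif[OF k1])
  have pZ_dist: "is_dist_on k (pZ k g Z)" for Z unfolding is_dist_on_def by (rule set_pZ[OF g0' k1])
  have acc_u: "(\<Sum>\<omega>\<in>W. Pu \<omega> * t \<omega>) \<ge> 2/3"
    using tst unif_dist unfolding rappor_uniformity_tester_def W_def Pu_def t_def
    by (auto simp: accept_sum[OF set_unif[OF k1]])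
  have far: "dTV k (pZ k g Z) (unif k) > gamma" for Z
  proof -
    have "dTV k (pZ k g Z) (unif k) = 4 * gamma * real m / k"
      using dTV_pZ[OF g0' k1, of Z] unfolding g_def m_def by simp
    also have "\<dots> > gamma" using m4 g0 k1 by (simp add: field_simps)
    finally show ?thesis .
  qed
  have acc_Z: "(\<Sum>\<omega>\<in>W. P Z \<omega> * t \<omega>) \<le> 1/3" for Z
  proof -
    have "1 - accept_prob k eps n T (pZ k g Z) \<ge> 2/3"
      using tst pZ_dist far unfolding rappor_uniformity_tester_def by blast
    then show ?thesis unfolding W_def P_def t_def
      by (simp add: accept_sum[OF set_pZ[OF g0' k1]])
  qed
  have core: "10/9 \<le> (\<Sum>Z\<in>Zs. \<Sum>Z'\<in>Zs. \<Sum>\<omega>\<in>W. P Z \<omega> * P Z' \<omega> / Pu \<omega>) / (card Zs)^2"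
  proof (rule tester_core)
    show "finite W" unfolding W_def by (rule finite_Om)
    show "finite Zs" "Zs \<noteq> {}" unfolding Zs_def by auto
    show "0 < Pu \<omega>" if "\<omega> \<in> W" for \<omega> using Pu_eq[OF that] Qu_pos by (simp add: prod_pos)
    show "(\<Sum>\<omega>\<in>W. Pu \<omega>) = 1" unfolding W_def Pu_def
      by (rule sum_pmf_eq_1[OF finite_Om set_reports[OF set_unif[OF k1]]])
    show "(\<Sum>\<omega>\<in>W. P Z \<omega>) = 1" for Z unfolding W_def P_def
      by (rule sum_pmf_eq_1[OF finite_Om set_reports[OF set_pZ[OF g0' k1]]])
    show "0 \<le> t \<omega> \<and> t \<omega> \<le> 1" for \<omega> unfolding t_def by (simp add: pmf_le_1)
  qed (use acc_u acc_Z in auto)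
  define R where "R Z Z' = (\<Sum>i\<in>{1..m}. sg Z i * sg Z' i * NN k eps i)" for Z Z'
  have inner: "(\<Sum>\<omega>\<in>W. P Z \<omega> * P Z' \<omega> / Pu \<omega>) \<le> exp (real n * c^2 * R Z Z')" for Z Z'
  proof -
    have "(\<Sum>\<omega>\<in>W. P Z \<omega> * P Z' \<omega> / Pu \<omega>) = (\<Sum>\<omega>\<in>W. \<Prod>i<n. QZ Z (\<omega> i) * QZ Z' (\<omega> i) / Qu (\<omega> i))"
      by (intro sum.cong refl) (simp add: P_eq Pu_eq prod.distrib prod_dividef)
    also have "\<dots> = (\<Sum>b\<in>Pow {1..k}. QZ Z b * QZ Z' b / Qu b) ^ n"
      unfolding W_def by (rule sum_prod_Om)
    also have "(\<Sum>b\<in>Pow {1..k}. QZ Z b * QZ Z' b / Qu b) = 1 + c^2 * R Z Z'"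
      unfolding QZ_def Qu_def R_def m_def by (rule rho[OF k1])
    also have "(1 + c^2 * R Z Z') ^ n \<le> exp (c^2 * R Z Z') ^ n"
    proof (rule power_mono)
      show "1 + c^2 * R Z Z' \<le> exp (c^2 * R Z Z')" by (rule exp_ge_add_one_self)
      have "0 \<le> (\<Sum>b\<in>Pow {1..k}. QZ Z b * QZ Z' b / Qu b)"
      proof (intro sum_nonneg)
        fix b assume b: "b \<in> Pow {1..k}"
        show "0 \<le> QZ Z b * QZ Z' b / Qu b"
          using QZ_pmf[OF b, symmetric] Qu_pos[of b] by (simp add: less_imp_le)
      qed
      also have "(\<Sum>b\<in>Pow {1..k}. QZ Z b * QZ Z' b / Qu b) = 1 + c^2 * R Z Z'"
        unfolding QZ_def Qu_def R_def m_def by (rule rho[OF k1])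
      finally show "0 \<le> 1 + c^2 * R Z Z'" .
    qed
    also have "exp (c^2 * R Z Z') ^ n = exp (real n * c^2 * R Z Z')"
      by (simp add: exp_of_nat_mult[symmetric] mult.assoc)
    finally show ?thesis .
  qed
  define Y where "Y = real n * c^2 * (8 * eps^2)"
  have NNb: "0 \<le> NN k eps i \<and> NN k eps i \<le> 8 * eps^2" if "i \<in> {1..m}" for i
    using NN_bound[OF k1 _ that[unfolded m_def], of eps] eps_bound[OF e0 e1] e0 by auto
  have cases: "Y \<ge> 1 \<or> 10/9 \<le> exp (real m * Y^2)"
  proof (cases "Y \<ge> 1")
    case True then show ?thesis by simp
  next
    case False
    then have Y1: "Y < 1" by simp
    have Y0: "0 \<le> Y" unfolding Y_def by simp
    have sumZ: "(\<Sum>Z'\<in>Zs. exp (real n * c^2 * R Z Z')) \<le> 2^m * exp (real m * Y^2)" for Z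
    proof -
      have "(\<Sum>Z'\<in>Zs. exp (real n * c^2 * R Z Z')) = (\<Sum>Z'\<in>Pow {1..m}. exp (\<Sum>i\<in>{1..m}. sg Z' i * (real n * c^2 * sg Z i * NN k eps i)))"
        unfolding Zs_def R_def by (intro sum.cong refl) (simp add: sum_distrib_left mult_ac)
      also have "\<dots> = (\<Prod>i\<in>{1..m}. exp (real n * c^2 * sg Z i * NN k eps i) + exp (- (real n * c^2 * sg Z i * NN k eps i)))"
        by (rule sum_exp_signs) simp
      also have "\<dots> \<le> (\<Prod>i\<in>{1..m}. 2 * exp (Y^2))"
      proof (intro prod_mono conjI)
        fix i assume i: "i \<in> {1..m}"
        let ?w = "real n * c^2 * sg Z i * NN k eps i"
        have aw: "\<bar>?w\<bar> = real n * c^2 * NN k eps i" using NNb[OF i] by (simp add: abs_mult sg_def)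
        have "real n * c^2 * NN k eps i \<le> Y" unfolding Y_def using NNb[OF i]
          by (intro mult_left_mono) auto
        then have awY: "\<bar>?w\<bar> \<le> Y" using aw by simp
        show "0 \<le> exp ?w + exp (- ?w)" by (simp add: add_nonneg_nonneg)
        have "exp ?w + exp (- ?w) \<le> 2 * exp (?w^2)" using awY Y1 by (intro cosh_bound) auto
        also have "?w^2 \<le> Y^2" using awY by (metis abs_ge_zero power2_abs power_mono)
        then have "2 * exp (?w^2) \<le> 2 * exp (Y^2)" by simp
        finally show "exp ?w + exp (- ?w) \<le> 2 * exp (Y^2)" .
      qed
      also have "\<dots> = 2^m * exp (real m * Y^2)"
        by (simp add: power_mult_distrib exp_of_nat_mult[symmetric])
      finally show ?thesis .
    qed
    have cZ: "card Zs = 2^m" unfolding Zs_def by (simp add: card_Pow)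
    have "(\<Sum>Z\<in>Zs. \<Sum>Z'\<in>Zs. \<Sum>\<omega>\<in>W. P Z \<omega> * P Z' \<omega> / Pu \<omega>) \<le> (\<Sum>Z\<in>Zs. \<Sum>Z'\<in>Zs. exp (real n * c^2 * R Z Z'))"
      by (intro sum_mono inner)
    also have "\<dots> \<le> (\<Sum>Z\<in>Zs. 2^m * exp (real m * Y^2))" by (intro sum_mono sumZ)
    also have "\<dots> = (2^m)^2 * exp (real m * Y^2)" using cZ by (simp add: power2_eq_square)
    finally have "(\<Sum>Z\<in>Zs. \<Sum>Z'\<in>Zs. \<Sum>\<omega>\<in>W. P Z \<omega> * P Z' \<omega> / Pu \<omega>) / (card Zs)^2 \<le> exp (real m * Y^2)"
      using cZ by (simp add: divide_le_eq mult.commute)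
    then have "10/9 \<le> exp (real m * Y^2)" using core by linarith
    then show ?thesis by simp
  qed
  have Ydef: "Y = 128 * real n * (gamma^2 * eps^2) / (real k)^2"
    unfolding Y_def c_def g_def by (simp add: power2_eq_square field_simps)
  show ?thesis
    by (rule final_arith[OF _ _ _ Ydef _ _ cases]) (use k1 g0 e0 mk in auto)
qed


theorem theorem5p2:
  shows "\<exists>c>0. \<forall>k::nat. \<forall>gamma::real. \<forall>eps::real. \<forall>n::nat.
           \<forall>T :: (nat \<Rightarrow> nat set) \<Rightarrow> bool pmf.
             k \<ge> 2 \<longrightarrow> 0 < gamma \<longrightarrow> gamma \<le> 1/4 \<longrightarrow> 0 < eps \<longrightarrow> eps \<le> 1 \<longrightarrow>
             rappor_uniformity_tester k eps gamma n T \<longrightarrow>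
             real n \<ge> c * real k powr (3/2) / (gamma^2 * eps^2)"
proof (rule exI[of _ "1/300"], intro conjI allI impI)
  fix k n :: nat and gamma eps :: real and T :: "(nat \<Rightarrow> nat set) \<Rightarrow> bool pmf"
  assume "k \<ge> 2" "0 < gamma" "gamma \<le> 1/4" "0 < eps" "eps \<le> 1"
    "rappor_uniformity_tester k eps gamma n T"
  then show "real n \<ge> 1/300 * real k powr (3/2) / (gamma^2 * eps^2)"
    by (rule main_bound)
qed simp

end
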